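(* Let $n\ge1$ and $c\in\mathbb{R}$. For each $L\subsetneqq\Omega_n=\{1,\dots,n\}$ let $\phi_L$ be an arbitrary real-valued function on $F^{n-|L|}$, and let $\phi_{\Omega_n}(\omega)=c$. Define $f$ on the product states of $\mathcal{H}_n=\otimes^n\mathbb{C}^2$ by \[ f(\sigma_J(z))=\sum_{L\subset J}(-1)^{|J-L|}\phi_L(\tau_L(z))\qquad (J\subset\Omega_n,\ z\in F_n). \] Then $\sum_{i=1}^{2^n} f(z_i)=c$ for every unentangled orthonormal basis $z_1,\dots,z_{2^n}$ of $\mathcal{H}_n$.
   Context: One-qubit states are points of $\mathbb{P}^1(\mathbb{C})$, identified with $\mathbb{C}\cup\{\infty\}$ via $(x,y)\mapsto x/y$. Let $\sigma(x,y)=(-\bar y,\bar x)$ on $\mathbb{C}^2$, inducing $\sigma z=-1/\bar z$; $\sigma v$ is the state orthogonal to $v$. $F=\{|z|<1\}\cup\{|z|=1,\operatorname{Im}z>0\}\cup\{1\}$ is a fundamental domain for $\sigma$. Product states of $\mathcal{H}_n$ are $z_1\otimes\cdots\otimes z_n$ with $z_i$ one-qubit states; $F_n$ is the set of those with all $z_i\in F$; $F^m$ is the direct product of $m$ copies of $F$, $F^0=\{\omega\}$. For $J\subset\Omega_n$, $\sigma_J$ applies $\sigma$ in the factors indexed by $J$ and the identity elsewhere; every product state equals $\sigma_J(z)$ for a unique $J$ and $z\in F_n$, so $f$ is well defined. For $z\in F_n$ and $J\ne\Omega_n$ with complement $\{i_1<\dots<i_k\}$, $\tau_J(z)=(z_{i_1},\dots,z_{i_k})$;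 $\tau_{\Omega_n}(z)=\omega$. An unentangled orthonormal basis is an orthonormal basis consisting of product unit vectors. *)

theory Defs
  imports Complex_Main
begin

text \<open>One-qubit states: points of P^1(C) = C \<union> {\<infinity>}, represented as
  complex option (None = \<infinity>, Some z = z).  A nonzero vector (x,y) of C^2 gives
  the point x/y.\<close>

definition proj1 :: "complex \<times> complex \<Rightarrow> complex option" where
  "proj1 v = (if snd v = 0 then None else Some (fst v / snd v))"

text \<open>The map induced by sigma(x,y) = (-conj y, conj x): z \<mapsto> -1/conj z.\<close>
definition sig :: "complex option \<Rightarrow> complex option" where
  "sig w = (case w of None \<Rightarrow> Some 0
                    | Some z \<Rightarrow> (if z = 0 then None else Some (- 1 / cnj z)))"

definition Fdom :: "complex option set" where
  "Fdom = {Some z | z. cmod z < 1} \<union> {Some z | z. cmod z = 1 \<and> Im z > 0} \<union> {Some 1}"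

text \<open>Product states of H_n are n-tuples of one-qubit states, given as lists of
  length n; position i-1 of the list is the factor with index i \<in> {1..n}.\<close>

definition Fn :: "nat \<Rightarrow> complex option list set" where
  "Fn n = {z. length z = n \<and> set z \<subseteq> Fdom}"

definition sigmaJ :: "nat set \<Rightarrow> complex option list \<Rightarrow> complex option list" where
  "sigmaJ J z = map (\<lambda>i. if i \<in> J then sig (z ! (i - 1)) else z ! (i - 1)) [1..<length z + 1]"

definition tauL :: "nat set \<Rightarrow> complex option list \<Rightarrow> complex option list" where
  "tauL L z = map (\<lambda>i. z ! (i - 1)) (filter (\<lambda>i. i \<notin> L) [1..<length z + 1])"

text \<open>H_n = tensor^n C^2, realised as functions on bit strings of length n.\<close>

definition Bits :: "nat \<Rightarrow> bool list set" where
  "Bits n = {bs. length bs = n}"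

definition inner_n :: "nat \<Rightarrow> (bool list \<Rightarrow> complex) \<Rightarrow> (bool list \<Rightarrow> complex) \<Rightarrow> complex" where
  "inner_n n u v = (\<Sum>bs\<in>Bits n. cnj (u bs) * v bs)"

definition tensor :: "(complex \<times> complex) list \<Rightarrow> bool list \<Rightarrow> complex" where
  "tensor vs bs = (\<Prod>i<length vs. if bs ! i then snd (vs ! i) else fst (vs ! i))"

definition unentangled_onb :: "nat \<Rightarrow> (nat \<Rightarrow> (complex \<times> complex) list) \<Rightarrow> bool" where
  "unentangled_onb n u \<longleftrightarrow>
     (\<forall>k<2^n. length (u k) = n) \<and>
     (\<forall>k<2^n. \<forall>l<2^n. inner_n n (tensor (u k)) (tensor (u l)) = (if k = l then 1 else 0)) \<and>
     (\<forall>\<psi> :: bool list \<Rightarrow> complex. \<exists>a :: nat \<Rightarrow> complex.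
        \<forall>bs\<in>Bits n. \<psi> bs = (\<Sum>k<2^n. a k * tensor (u k) bs))"

end

theory Submission
  imports Defs
begin


definition qinner :: "complex \<times> complex \<Rightarrow> complex \<times> complex \<Rightarrow> complex" where
  "qinner p q = cnj (fst p) * fst q + cnj (snd p) * snd q"

lemma sig_sig: "sig (sig x) = x"
proof (cases x)
  case None then show ?thesis by (simp add: sig_def)
next
  case (Some z) then show ?thesis
    by (cases "z = 0") (auto simp: sig_def)
qed

lemma unit_inv_cnj: "cmod z = 1 \<Longrightarrow> 1 / cnj z = z"
proof -
  assume a: "cmod z = 1"
  have e: "z * cnj z = 1" using complex_norm_square[of z] a by simp
  then have "cnj z \<noteq> 0" by auto
  then show "1 / cnj z = z" using e by (simp add: divide_simps)
qed

lemma F_le1: "Some w \<in> Fdom \<Longrightarrow> cmod w \<le> 1"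
  by (auto simp: Fdom_def)

lemma F_sig: "a \<in> Fdom \<Longrightarrow> sig a \<notin> Fdom"
proof -
  assume a: "a \<in> Fdom"
  then obtain z where z: "a = Some z" and c: "cmod z < 1 \<or> (cmod z = 1 \<and> Im z > 0) \<or> z = 1"
    by (auto simp: Fdom_def)
  show ?thesis
  proof (cases "z = 0")
    case True then show ?thesis using z by (auto simp: sig_def Fdom_def)
  next
    case False
    have s: "sig a = Some (- 1 / cnj z)" using z False by (simp add: sig_def)
    have n: "cmod (- 1 / cnj z) = 1 / cmod z" by (simp add: norm_divide complex_mod_cnj)
    show ?thesis
    proof (cases "cmod z < 1")
      case True
      moreover have "cmod z > 0" using False by simp
      ultimately have "cmod (- 1 / cnj z) > 1" using n by simp
      then show ?thesis using s F_le1 by fastforce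
    next
      case nc: False
      then have m1: "cmod z = 1" using c by auto
      then have w: "- 1 / cnj z = - z" using unit_inv_cnj[OF m1] by (simp add: minus_divide_left)
      have "Im z \<ge> 0" using c nc by auto
      moreover have "- z \<noteq> 1" using c nc m1 by (auto simp: complex_eq_iff)
      ultimately show ?thesis using s w c nc by (auto simp: Fdom_def)
    qed
  qed
qed

lemma sig_F: "a \<notin> Fdom \<Longrightarrow> sig a \<in> Fdom"
proof -
  assume a: "a \<notin> Fdom"
  show ?thesis
  proof (cases a)
    case None then show ?thesis by (auto simp: sig_def Fdom_def)
  next
    case (Some z)
    have nz: "z \<noteq> 0" using a Some by (auto simp: Fdom_def)
    have s: "sig a = Some (- 1 / cnj z)" using Some nz by (simp add: sig_def)
    have n: "cmod (- 1 / cnj z) = 1 / cmod z" by (simp add: norm_divide complex_mod_cnj)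
    show ?thesis
    proof (cases "cmod z > 1")
      case True
      then have "1 / cmod z < 1" by (simp add: divide_less_eq)
      then have "cmod (- 1 / cnj z) < 1" using n by simp
      then show ?thesis using s by (auto simp: Fdom_def)
    next
      case False
      then have m1: "cmod z = 1" using a Some by (auto simp: Fdom_def)
      then have w: "- 1 / cnj z = - z" using unit_inv_cnj[OF m1] by (simp add: minus_divide_left)
      have i: "Im z \<le> 0" "z \<noteq> 1" using a Some m1 by (auto simp: Fdom_def)
      show ?thesis
      proof (cases "Im z < 0")
        case True then show ?thesis using s w m1 by (auto simp: Fdom_def)
      next
        case False
        then have "Im z = 0" using i by auto
        then have "z = complex_of_real (Re z)" by (simp add: complex_eq_iff)
        moreover have "\<bar>Re z\<bar> = 1" using m1 \<open>Im z = 0\<close> by (simp add: cmod_def)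
        ultimately have "z = -1" using i by (auto simp: abs_if split: if_splits)
        then show ?thesis using s w by (auto simp: Fdom_def)
      qed
    qed
  qed
qed

lemma qinner_orth:
  assumes "q \<noteq> (0,0)" "q' \<noteq> (0,0)" "qinner q q' = 0"
  shows "proj1 q' = sig (proj1 q)"
proof -
  obtain x y where q: "q = (x,y)" by (cases q)
  obtain x' y' where q': "q' = (x',y')" by (cases q')
  have e: "cnj x * x' + cnj y * y' = 0" using assms(3) q q' by (simp add: qinner_def)
  show ?thesis
  proof (cases "y = 0")
    case True
    then have "x \<noteq> 0" using assms q by auto
    then have "x' = 0" using e True by simp
    then have "y' \<noteq> 0" using assms q' by auto
    then show ?thesis using True q q' \<open>x' = 0\<close> by (simp add: proj1_def sig_def)
  next
    case yn: False
    show ?thesis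
    proof (cases "x = 0")
      case True
      then have "y' = 0" using e yn by simp
      then show ?thesis using True yn q q' by (simp add: proj1_def sig_def)
    next
      case xn: False
      have x': "x' = - cnj y * y' / cnj x" using e xn by (simp add: field_simps add_eq_0_iff2)
      have "y' \<noteq> 0" using x' assms q' by auto
      have d1: "x' / y' = - cnj y / cnj x" using x' \<open>y' \<noteq> 0\<close> by simp
      have d2: "- 1 / cnj (x / y) = - cnj y / cnj x" by (simp add: complex_cnj_divide)
      show ?thesis using q q' xn yn d1 d2 \<open>y' \<noteq> 0\<close> by (simp add: proj1_def sig_def)
    qed
  qed
qed



lemma Bits_0: "Bits 0 = {[]}" by (auto simp: Bits_def)

lemma Bits_Suc: "Bits (Suc m) = Cons False ` Bits m \<union> Cons True ` Bits m"
proof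
  show "Bits (Suc m) \<subseteq> Cons False ` Bits m \<union> Cons True ` Bits m"
  proof
    fix bs assume "bs \<in> Bits (Suc m)"
    then obtain b cs where "bs = b # cs" "length cs = m" by (auto simp: Bits_def length_Suc_conv)
    then show "bs \<in> Cons False ` Bits m \<union> Cons True ` Bits m" by (cases b) (auto simp: Bits_def)
  qed
qed (auto simp: Bits_def)

lemma finite_Bits: "finite (Bits m)"
  by (induction m) (auto simp: Bits_0 Bits_Suc)

lemma sum_Bits_Suc: "(\<Sum>bs\<in>Bits (Suc m). g bs) = (\<Sum>bs\<in>Bits m. g (False # bs) + g (True # bs))"
proof -
  have "(\<Sum>bs\<in>Bits (Suc m). g bs) = (\<Sum>bs\<in>Cons False ` Bits m. g bs) + (\<Sum>bs\<in>Cons True ` Bits m. g bs)"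
    unfolding Bits_Suc by (rule sum.union_disjoint) (auto simp: finite_Bits)
  also have "\<dots> = (\<Sum>bs\<in>Bits m. g (False # bs)) + (\<Sum>bs\<in>Bits m. g (True # bs))"
    by (simp add: sum.reindex)
  finally show ?thesis by (simp add: sum.distrib)
qed

lemma tensor_Cons: "tensor (q # vs) (b # bs) = (if b then snd q else fst q) * tensor vs bs"
proof -
  have e: "(\<Prod>i<length vs. if (b # bs) ! Suc i then snd ((q # vs) ! Suc i) else fst ((q # vs) ! Suc i))
     = (\<Prod>i<length vs. if bs ! i then snd (vs ! i) else fst (vs ! i))"
    by (rule prod.cong) auto
  show ?thesis
    unfolding tensor_def length_Cons prod.lessThan_Suc_shift e by simp
qed

lemma inner_Cons:
  "inner_n (Suc m) (tensor (q # vs)) (tensor (q' # ws)) = qinner q q' * inner_n m (tensor vs) (tensor ws)"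
  unfolding inner_n_def sum_Bits_Suc tensor_Cons qinner_def
  by (simp add: sum_distrib_left algebra_simps sum.distrib)

lemma set_tl_sub: "q \<in> set (tl xs) \<Longrightarrow> q \<in> set xs"
  by (cases xs) auto

lemma inner_Nil: "inner_n 0 (tensor []) (tensor []) = 1"
  by (simp add: inner_n_def Bits_0 tensor_def)

lemma rest_orth:
  assumes "q \<noteq> (0,0)" "q' \<noteq> (0,0)" "proj1 q' \<noteq> sig (proj1 q)"
    and "inner_n (Suc m) (tensor (q # t)) (tensor (q' # t')) = 0"
  shows "inner_n m (tensor t) (tensor t') = 0"
  using assms qinner_orth[of q q'] inner_Cons[of m q t q' t'] by auto

lemma hd_tl_eq: "length xs = Suc m \<Longrightarrow> xs = hd xs # tl xs"
  by (cases xs) auto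

lemma card_bound:
  "finite K \<Longrightarrow> (\<forall>k\<in>K. length (v k) = m \<and> (\<forall>q\<in>set (v k). q \<noteq> (0,0))) \<Longrightarrow>
   (\<forall>k\<in>K. \<forall>l\<in>K. k \<noteq> l \<longrightarrow> inner_n m (tensor (v k)) (tensor (v l)) = 0) \<Longrightarrow> card K \<le> 2^m"
proof (induction m arbitrary: K v)
  case 0
  have "\<forall>a\<in>K. \<forall>b\<in>K. a = b"
  proof (intro ballI)
    fix a b assume "a \<in> K" "b \<in> K"
    then have "v a = []" "v b = []" using 0 by auto
    then show "a = b" using 0 \<open>a \<in> K\<close> \<open>b \<in> K\<close> inner_Nil by force
  qed
  then show ?case using card_le_Suc0_iff_eq[OF 0(1)] by simp
next
  case (Suc m)
  define x where "x k = proj1 (hd (v k))" for k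
  define A where "A = {k\<in>K. x k \<in> Fdom}"
  define B where "B = {k\<in>K. x k \<notin> Fdom}"
  have vk: "\<And>k. k \<in> K \<Longrightarrow> v k = hd (v k) # tl (v k)" using Suc.prems(2) hd_tl_eq by blast
  have hn: "\<And>k. k \<in> K \<Longrightarrow> hd (v k) \<noteq> (0,0)" using Suc.prems(2) vk by (metis list.set_intros(1))
  have gen: "card X \<le> 2^m" if X: "X \<subseteq> K" "\<And>k l. k \<in> X \<Longrightarrow> l \<in> X \<Longrightarrow> k \<noteq> l \<Longrightarrow> x l \<noteq> sig (x k)" for X
  proof (rule Suc.IH)
    show "finite X" using X Suc.prems(1) finite_subset by blast
    show "\<forall>k\<in>X. length (tl (v k)) = m \<and> (\<forall>q\<in>set (tl (v k)). q \<noteq> (0,0))"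
      using X Suc.prems(2) set_tl_sub by (metis length_tl diff_Suc_1 subsetD)
    show "\<forall>k\<in>X. \<forall>l\<in>X. k \<noteq> l \<longrightarrow> inner_n m (tensor (tl (v k))) (tensor (tl (v l))) = 0"
    proof (intro ballI impI)
      fix k l assume kl: "k \<in> X" "l \<in> X" "k \<noteq> l"
      then have "inner_n (Suc m) (tensor (hd (v k) # tl (v k))) (tensor (hd (v l) # tl (v l))) = 0"
        using Suc.prems(3) X vk by (metis subsetD)
      then show "inner_n m (tensor (tl (v k))) (tensor (tl (v l))) = 0"
        using rest_orth hn X kl x_def by (metis subsetD)
    qed
  qed
  have "card A \<le> 2^m" by (rule gen) (auto simp: A_def dest: F_sig)
  moreover have "card B \<le> 2^m" by (rule gen) (auto simp: B_def dest: sig_F)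
  moreover have "card K = card A + card B"
    using Suc.prems(1) unfolding A_def B_def by (subst card_Un_disjoint[symmetric]) (auto intro: arg_cong[where f=card])
  ultimately show ?case by simp
qed



fun good :: "nat \<Rightarrow> (complex option list \<Rightarrow> real) \<Rightarrow> real \<Rightarrow> bool" where
  "good 0 g c = (g [] = c)"
| "good (Suc m) g c = ((\<exists>h. good m h c \<and> (\<forall>a\<in>Fdom. \<forall>r. length r = m \<longrightarrow> g (a # r) + g (sig a # r) = h r))
      \<and> (\<forall>a\<in>Fdom. \<exists>c1. good m (\<lambda>r. g (a # r)) c1))"

definition rep :: "complex option \<Rightarrow> complex option" where
  "rep x = (if x \<in> Fdom then x else sig x)"

lemma rep_F: "rep x \<in> Fdom" by (simp add: rep_def sig_F)

lemma partner: "y = sig x \<Longrightarrow> rep y = rep x \<and> (x \<in> Fdom \<longleftrightarrow> y \<notin> Fdom)"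
  using F_sig sig_F sig_sig by (auto simp: rep_def)

lemma main:
  "good m g c \<Longrightarrow> finite K \<Longrightarrow> card K = 2^m \<Longrightarrow>
   (\<forall>k\<in>K. length (v k) = m \<and> (\<forall>q\<in>set (v k). q \<noteq> (0,0))) \<Longrightarrow>
   (\<forall>k\<in>K. \<forall>l\<in>K. k \<noteq> l \<longrightarrow> inner_n m (tensor (v k)) (tensor (v l)) = 0) \<Longrightarrow>
   (\<Sum>k\<in>K. g (map proj1 (v k))) = c"
proof (induction m arbitrary: g c K v)
  case 0
  then obtain k where K: "K = {k}" by (metis card_1_singletonE power_0)
  then show ?case using 0 by simp
next
  case (Suc m)
  define x where "x k = proj1 (hd (v k))" for k
  define s where "s k = map proj1 (tl (v k))" for k
  define A where "A = {k\<in>K. x k \<in> Fdom}"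
  define B where "B = {k\<in>K. x k \<notin> Fdom}"
  have fK: "finite K" using Suc.prems by simp
  have vk: "\<And>k. k \<in> K \<Longrightarrow> v k = hd (v k) # tl (v k)" using Suc.prems(4) hd_tl_eq by blast
  have hn: "\<And>k. k \<in> K \<Longrightarrow> hd (v k) \<noteq> (0,0)" using Suc.prems(4) vk by (metis list.set_intros(1))
  have ls: "\<And>k. k \<in> K \<Longrightarrow> length (s k) = m" using Suc.prems(4) by (simp add: s_def)
  have mv: "\<And>k. k \<in> K \<Longrightarrow> map proj1 (v k) = x k # s k" using vk x_def s_def by (metis list.simps(9))
  have cond: "X \<subseteq> K \<and> (\<forall>k\<in>X. length (tl (v k)) = m \<and> (\<forall>q\<in>set (tl (v k)). q \<noteq> (0,0))) \<and>
      (\<forall>k\<in>X. \<forall>l\<in>X. k \<noteq> l \<longrightarrow> inner_n m (tensor (tl (v k))) (tensor (tl (v l))) = 0)"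
    if X: "X \<subseteq> K" "\<And>k l. k \<in> X \<Longrightarrow> l \<in> X \<Longrightarrow> rep (x k) = rep (x l) \<Longrightarrow> (x k \<in> Fdom \<longleftrightarrow> x l \<in> Fdom)" for X
  proof (intro conjI)
    show "X \<subseteq> K" by fact
    show "\<forall>k\<in>X. length (tl (v k)) = m \<and> (\<forall>q\<in>set (tl (v k)). q \<noteq> (0,0))"
      using X Suc.prems(4) set_tl_sub by (metis length_tl diff_Suc_1 subsetD)
    show "\<forall>k\<in>X. \<forall>l\<in>X. k \<noteq> l \<longrightarrow> inner_n m (tensor (tl (v k))) (tensor (tl (v l))) = 0"
    proof (intro ballI impI)
      fix k l assume kl: "k \<in> X" "l \<in> X" "k \<noteq> l"
      then have "inner_n (Suc m) (tensor (hd (v k) # tl (v k))) (tensor (hd (v l) # tl (v l))) = 0"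
        using Suc.prems(5) X vk by (metis subsetD)
      moreover have "x l \<noteq> sig (x k)" using partner[of "x l" "x k"] X(2)[OF kl(1,2)] by auto
      ultimately show "inner_n m (tensor (tl (v k))) (tensor (tl (v l))) = 0"
        using rest_orth hn X kl x_def by (metis subsetD)
    qed
  qed
  have cardle: "card X \<le> 2^m"
    if X: "X \<subseteq> K" "\<And>k l. k \<in> X \<Longrightarrow> l \<in> X \<Longrightarrow> rep (x k) = rep (x l) \<Longrightarrow> (x k \<in> Fdom \<longleftrightarrow> x l \<in> Fdom)" for X
    using card_bound[of X "\<lambda>k. tl (v k)" m] cond[OF X] finite_subset[OF X(1) fK] by blast
  have ih: "(\<Sum>k\<in>X. g' (s k)) = c'"
    if X: "X \<subseteq> K" "\<And>k l. k \<in> X \<Longrightarrow> l \<in> X \<Longrightarrow> rep (x k) = rep (x l) \<Longrightarrow> (x k \<in> Fdom \<longleftrightarrow> x l \<in> Fdom)"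
      and cX: "card X = 2^m" and gg: "good m g' c'" for X g' c'
    using Suc.IH[of g' c' X "\<lambda>k. tl (v k)"] cond[OF X] finite_subset[OF X(1) fK] cX gg
    unfolding s_def by blast
  have AB: "A \<subseteq> K" "B \<subseteq> K" "A \<inter> B = {}" "A \<union> B = K" by (auto simp: A_def B_def)
  have condA: "\<And>k l. k \<in> A \<Longrightarrow> l \<in> A \<Longrightarrow> rep (x k) = rep (x l) \<Longrightarrow> (x k \<in> Fdom \<longleftrightarrow> x l \<in> Fdom)"
    by (auto simp: A_def)
  have condB: "\<And>k l. k \<in> B \<Longrightarrow> l \<in> B \<Longrightarrow> rep (x k) = rep (x l) \<Longrightarrow> (x k \<in> Fdom \<longleftrightarrow> x l \<in> Fdom)"
    by (auto simp: B_def)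
  have cA: "card A \<le> 2^m" by (rule cardle[OF AB(1) condA])
  have cB: "card B \<le> 2^m" by (rule cardle[OF AB(2) condB])
  have cK: "card K = card A + card B"
    using card_Un_disjoint[of A B] AB fK finite_subset by metis
  have cB2: "card B = 2^m" using cA cB cK Suc.prems(3) by simp
  from Suc.prems(1) obtain h where hg: "good m h c"
    and hp: "\<And>a r. a \<in> Fdom \<Longrightarrow> length r = m \<Longrightarrow> g (a # r) + g (sig a # r) = h r"
    and gc: "\<And>a. a \<in> Fdom \<Longrightarrow> \<exists>c1. good m (\<lambda>r. g (a # r)) c1" by auto
  have sumB: "(\<Sum>k\<in>B. h (s k)) = c" by (rule ih[OF AB(2) condB cB2 hg])
  have swap: "(\<Sum>k\<in>{k\<in>A. rep (x k) = a}. g (a # s k)) = (\<Sum>k\<in>{k\<in>B. rep (x k) = a}. g (a # s k))"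
    if aF: "a \<in> Fdom" for a
  proof -
    define C where "C = {k\<in>K. rep (x k) = a}"
    define X1 where "X1 = (A \<inter> C) \<union> (B - C)"
    define Y1 where "Y1 = (B \<inter> C) \<union> (A - C)"
    have X1s: "X1 \<subseteq> K" and Y1s: "Y1 \<subseteq> K" using AB by (auto simp: X1_def Y1_def)
    have condX: "\<And>k l. k \<in> X1 \<Longrightarrow> l \<in> X1 \<Longrightarrow> rep (x k) = rep (x l) \<Longrightarrow> (x k \<in> Fdom \<longleftrightarrow> x l \<in> Fdom)"
      by (auto simp: X1_def A_def B_def C_def)
    have condY: "\<And>k l. k \<in> Y1 \<Longrightarrow> l \<in> Y1 \<Longrightarrow> rep (x k) = rep (x l) \<Longrightarrow> (x k \<in> Fdom \<longleftrightarrow> x l \<in> Fdom)"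
      by (auto simp: Y1_def A_def B_def C_def)
    have fA: "finite A" "finite B" "finite C" using fK AB by (auto simp: C_def intro: finite_subset)
    have e1: "card X1 = card (A \<inter> C) + card (B - C)"
      unfolding X1_def using fA AB by (subst card_Un_disjoint) auto
    have e2: "card Y1 = card (B \<inter> C) + card (A - C)"
      unfolding Y1_def using fA AB by (subst card_Un_disjoint) auto
    have e3: "card A = card (A \<inter> C) + card (A - C)"
      using fA card_Un_disjoint[of "A \<inter> C" "A - C"] by (metis Int_Diff_Un Int_Diff_disjoint finite_Diff finite_Int)
    have e4: "card B = card (B \<inter> C) + card (B - C)"
      using fA card_Un_disjoint[of "B \<inter> C" "B - C"] by (metis Int_Diff_Un Int_Diff_disjoint finite_Diff finite_Int)
    have "card X1 \<le> 2^m" by (rule cardle[OF X1s condX])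
    moreover have "card Y1 \<le> 2^m" by (rule cardle[OF Y1s condY])
    ultimately have cX1: "card X1 = 2^m" using e1 e2 e3 e4 cK Suc.prems(3) by simp
    obtain c1 where g1: "good m (\<lambda>r. g (a # r)) c1" using gc[OF aF] by blast
    have s1: "(\<Sum>k\<in>X1. g (a # s k)) = c1" by (rule ih[OF X1s condX cX1 g1])
    have s2: "(\<Sum>k\<in>B. g (a # s k)) = c1" by (rule ih[OF AB(2) condB cB2 g1])
    have s1': "(\<Sum>k\<in>X1. g (a # s k)) = (\<Sum>k\<in>A \<inter> C. g (a # s k)) + (\<Sum>k\<in>B - C. g (a # s k))"
      unfolding X1_def using fA AB by (subst sum.union_disjoint) auto
    have s2': "(\<Sum>k\<in>B. g (a # s k)) = (\<Sum>k\<in>B \<inter> C. g (a # s k)) + (\<Sum>k\<in>B - C. g (a # s k))"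
      using fA sum.union_disjoint[of "B \<inter> C" "B - C"] by (metis Int_Diff_Un Int_Diff_disjoint finite_Diff finite_Int)
    have "A \<inter> C = {k\<in>A. rep (x k) = a}" "B \<inter> C = {k\<in>B. rep (x k) = a}" using AB by (auto simp: C_def)
    then show ?thesis using s1 s2 s1' s2' by simp
  qed
  have fAB: "finite A" "finite B" using fK AB finite_subset by metis+
  have rF: "(\<lambda>k. rep (x k)) ` K \<subseteq> Fdom" using rep_F by auto
  have gA: "(\<Sum>k\<in>A. g (rep (x k) # s k)) = (\<Sum>a\<in>(\<lambda>k. rep (x k)) ` K. \<Sum>k\<in>{k\<in>A. rep (x k) = a}. g (rep (x k) # s k))"
    by (rule sum.group[symmetric]) (use fAB fK AB in auto)
  have gB: "(\<Sum>k\<in>B. g (rep (x k) # s k)) = (\<Sum>a\<in>(\<lambda>k. rep (x k)) ` K. \<Sum>k\<in>{k\<in>B. rep (x k) = a}. g (rep (x k) # s k))"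
    by (rule sum.group[symmetric]) (use fAB fK AB in auto)
  have AeqB: "(\<Sum>k\<in>A. g (rep (x k) # s k)) = (\<Sum>k\<in>B. g (rep (x k) # s k))"
  proof -
    have "(\<Sum>k\<in>{k\<in>A. rep (x k) = a}. g (rep (x k) # s k)) = (\<Sum>k\<in>{k\<in>B. rep (x k) = a}. g (rep (x k) # s k))"
      if "a \<in> (\<lambda>k. rep (x k)) ` K" for a
    proof -
      have "(\<Sum>k\<in>{k\<in>A. rep (x k) = a}. g (rep (x k) # s k)) = (\<Sum>k\<in>{k\<in>A. rep (x k) = a}. g (a # s k))"
        by (rule sum.cong) auto
      also have "\<dots> = (\<Sum>k\<in>{k\<in>B. rep (x k) = a}. g (a # s k))" using swap rF that by blast
      also have "\<dots> = (\<Sum>k\<in>{k\<in>B. rep (x k) = a}. g (rep (x k) # s k))"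
        by (rule sum.cong) auto
      finally show ?thesis .
    qed
    then show ?thesis using gA gB by simp
  qed
  have tot: "(\<Sum>k\<in>K. g (map proj1 (v k))) = (\<Sum>k\<in>A. g (rep (x k) # s k)) + (\<Sum>k\<in>B. g (sig (rep (x k)) # s k))"
  proof -
    have "(\<Sum>k\<in>K. g (map proj1 (v k))) = (\<Sum>k\<in>A. g (map proj1 (v k))) + (\<Sum>k\<in>B. g (map proj1 (v k)))"
      using sum.union_disjoint[of A B] fAB AB by metis
    moreover have "(\<Sum>k\<in>A. g (map proj1 (v k))) = (\<Sum>k\<in>A. g (rep (x k) # s k))"
      by (rule sum.cong) (auto simp: mv A_def rep_def)
    moreover have "(\<Sum>k\<in>B. g (map proj1 (v k))) = (\<Sum>k\<in>B. g (sig (rep (x k)) # s k))"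
      by (rule sum.cong) (auto simp: mv B_def rep_def sig_sig)
    ultimately show ?thesis by simp
  qed
  have "(\<Sum>k\<in>B. h (s k)) = (\<Sum>k\<in>B. g (rep (x k) # s k)) + (\<Sum>k\<in>B. g (sig (rep (x k)) # s k))"
    unfolding sum.distrib[symmetric]
    by (rule sum.cong) (use hp rep_F ls AB in auto)
  then show ?case using tot AeqB sumB by simp
qed



lemma upt_shift: "[1..<Suc n + 1] = 1 # map Suc [1..<n + 1]"
  by (simp add: map_Suc_upt upt_conv_Cons)

lemma sigmaJ_Suc: "0 \<notin> J \<Longrightarrow> sigmaJ (Suc ` J) (a # z) = a # sigmaJ J z"
  unfolding sigmaJ_def length_Cons upt_shift
  by (auto simp: image_iff nth_Cons' intro!: map_cong)

lemma sigmaJ_ins: "0 \<notin> J \<Longrightarrow> sigmaJ (insert 1 (Suc ` J)) (a # z) = sig a # sigmaJ J z"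
  unfolding sigmaJ_def length_Cons upt_shift
  by (auto simp: image_iff nth_Cons' intro!: map_cong)

lemma tauL_Suc: "0 \<notin> L \<Longrightarrow> tauL (Suc ` L) (a # z) = a # tauL L z"
  unfolding tauL_def length_Cons upt_shift
  by (auto simp: image_iff nth_Cons' filter_map comp_def intro!: map_cong filter_cong)

lemma tauL_ins: "0 \<notin> L \<Longrightarrow> tauL (insert 1 (Suc ` L)) (a # z) = tauL L z"
  unfolding tauL_def length_Cons upt_shift
  by (auto simp: image_iff nth_Cons' filter_map comp_def intro!: map_cong filter_cong)

lemma Fn_Cons: "a # z \<in> Fn (Suc n) \<longleftrightarrow> a \<in> Fdom \<and> z \<in> Fn n"
  by (auto simp: Fn_def)

lemma Fn_0: "Fn 0 = {[]}" by (auto simp: Fn_def)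

lemma Pow_image_Suc: "Pow (Suc ` J) = image Suc ` Pow J"
  by (auto simp: subset_image_iff)

lemma inj_image_Suc: "inj_on (image Suc) X"
  by (auto simp: inj_on_def inj_image_eq_iff)

lemma sum_Pow_Suc: "(\<Sum>L\<in>Pow (Suc ` J). F L) = (\<Sum>L\<in>Pow J. F (Suc ` L))"
  unfolding Pow_image_Suc by (simp add: sum.reindex[OF inj_image_Suc])

lemma sum_Pow_ins:
  assumes "finite J" "0 \<notin> J"
  shows "(\<Sum>L\<in>Pow (insert 1 (Suc ` J)). F L) = (\<Sum>L\<in>Pow J. F (Suc ` L)) + (\<Sum>L\<in>Pow J. F (insert 1 (Suc ` L)))"
proof -
  have n1: "1 \<notin> Suc ` J" using assms by auto
  have inj: "inj_on (insert 1) (Pow (Suc ` J))"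
    unfolding inj_on_def using n1 by (metis Diff_insert_absorb PowD in_mono)
  have "(\<Sum>L\<in>Pow (insert 1 (Suc ` J)). F L) = (\<Sum>L\<in>Pow (Suc ` J). F L) + (\<Sum>L\<in>insert 1 ` Pow (Suc ` J). F L)"
    unfolding Pow_insert using assms n1 by (intro sum.union_disjoint) auto
  also have "(\<Sum>L\<in>insert 1 ` Pow (Suc ` J). F L) = (\<Sum>L\<in>Pow (Suc ` J). F (insert 1 L))"
    by (rule sum.reindex[OF inj, unfolded comp_def])
  finally show ?thesis by (simp add: sum_Pow_Suc)
qed

lemma card_Suc_diff: "card (Suc ` J - Suc ` L) = card (J - L)"
  by (metis card_image image_set_diff inj_Suc inj_on_diff inj_on_subset subset_UNIV)

lemma card_ins_diff: "finite J \<Longrightarrow> 0 \<notin> J \<Longrightarrow> 0 \<notin> L \<Longrightarrow> card (insert 1 (Suc ` J) - Suc ` L) = Suc (card (J - L))"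
proof -
  assume "finite J" "0 \<notin> J" "0 \<notin> L"
  then have "insert 1 (Suc ` J) - Suc ` L = insert 1 (Suc ` J - Suc ` L)" by auto
  moreover have "1 \<notin> Suc ` J - Suc ` L" using \<open>0 \<notin> J\<close> by auto
  ultimately show ?thesis using \<open>finite J\<close> card_Suc_diff by simp
qed

lemma card_ins_ins: "0 \<notin> J \<Longrightarrow> card (insert 1 (Suc ` J) - insert 1 (Suc ` L)) = card (J - L)"
proof -
  assume "0 \<notin> J"
  then have "insert 1 (Suc ` J) - insert 1 (Suc ` L) = Suc ` J - Suc ` L" by auto
  then show ?thesis using card_Suc_diff by simp
qed

definition hyp :: "nat \<Rightarrow> (nat set \<Rightarrow> complex option list \<Rightarrow> real) \<Rightarrow> (complex option list \<Rightarrow> real) \<Rightarrow> real \<Rightarrow> bool" where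
  "hyp n \<phi> f c \<longleftrightarrow> \<phi> {1..n} [] = c \<and> (\<forall>J. J \<subseteq> {1..n} \<longrightarrow> (\<forall>z\<in>Fn n.
           f (sigmaJ J z) = (\<Sum>L\<in>Pow J. (-1) ^ card (J - L) * \<phi> L (tauL L z))))"

lemma hyp_A:
  assumes h: "hyp (Suc n) \<phi> f c" and a: "a \<in> Fdom" and J: "J \<subseteq> {1..n}" and z: "z \<in> Fn n"
  shows "f (a # sigmaJ J z) = (\<Sum>L\<in>Pow J. (-1) ^ card (J - L) * \<phi> (Suc ` L) (a # tauL L z))"
proof -
  have J0: "0 \<notin> J" using J by auto
  have "f (a # sigmaJ J z) = f (sigmaJ (Suc ` J) (a # z))" using sigmaJ_Suc[OF J0] by simp
  also have "\<dots> = (\<Sum>L\<in>Pow (Suc ` J). (-1) ^ card (Suc ` J - L) * \<phi> L (tauL L (a # z)))"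
  proof -
    have "Suc ` J \<subseteq> {1..Suc n}" using J by auto
    moreover have "a # z \<in> Fn (Suc n)" using a z by (simp add: Fn_Cons)
    ultimately show ?thesis using h unfolding hyp_def by blast
  qed
  also have "\<dots> = (\<Sum>L\<in>Pow J. (-1) ^ card (Suc ` J - Suc ` L) * \<phi> (Suc ` L) (tauL (Suc ` L) (a # z)))"
    by (rule sum_Pow_Suc)
  also have "\<dots> = (\<Sum>L\<in>Pow J. (-1) ^ card (J - L) * \<phi> (Suc ` L) (a # tauL L z))"
    apply (rule sum.cong[OF refl])
    subgoal for L using J0 by (subgoal_tac "0 \<notin> L") (auto simp: card_Suc_diff tauL_Suc)
    done
  finally show ?thesis .
qed

lemma hyp_B:
  assumes h: "hyp (Suc n) \<phi> f c" and a: "a \<in> Fdom" and J: "J \<subseteq> {1..n}" and z: "z \<in> Fn n"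
  shows "f (sig a # sigmaJ J z) = (\<Sum>L\<in>Pow J. (-1) ^ card (J - L) *
            (\<phi> (insert 1 (Suc ` L)) (tauL L z) - \<phi> (Suc ` L) (a # tauL L z)))"
proof -
  have J0: "0 \<notin> J" using J by auto
  have fJ: "finite J" using J finite_subset by blast
  have "f (sig a # sigmaJ J z) = f (sigmaJ (insert 1 (Suc ` J)) (a # z))" using sigmaJ_ins[OF J0] by simp
  also have "\<dots> = (\<Sum>L\<in>Pow (insert 1 (Suc ` J)). (-1) ^ card (insert 1 (Suc ` J) - L) * \<phi> L (tauL L (a # z)))"
  proof -
    have "insert 1 (Suc ` J) \<subseteq> {1..Suc n}" using J by auto
    moreover have "a # z \<in> Fn (Suc n)" using a z by (simp add: Fn_Cons)
    ultimately show ?thesis using h unfolding hyp_def by blast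
  qed
  also have "\<dots> = (\<Sum>L\<in>Pow J. (-1) ^ card (insert 1 (Suc ` J) - Suc ` L) * \<phi> (Suc ` L) (tauL (Suc ` L) (a # z)))
      + (\<Sum>L\<in>Pow J. (-1) ^ card (insert 1 (Suc ` J) - insert 1 (Suc ` L)) * \<phi> (insert 1 (Suc ` L)) (tauL (insert 1 (Suc ` L)) (a # z)))"
    by (rule sum_Pow_ins[OF fJ J0])
  also have "(\<Sum>L\<in>Pow J. (-1) ^ card (insert 1 (Suc ` J) - Suc ` L) * \<phi> (Suc ` L) (tauL (Suc ` L) (a # z)))
      = (\<Sum>L\<in>Pow J. - ((-1) ^ card (J - L) * \<phi> (Suc ` L) (a # tauL L z)))"
    apply (rule sum.cong[OF refl])
    subgoal for L using J0 fJ by (subgoal_tac "0 \<notin> L") (auto simp: card_ins_diff[unfolded One_nat_def] tauL_Suc)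
    done
  also have "(\<Sum>L\<in>Pow J. (-1) ^ card (insert 1 (Suc ` J) - insert 1 (Suc ` L)) * \<phi> (insert 1 (Suc ` L)) (tauL (insert 1 (Suc ` L)) (a # z)))
      = (\<Sum>L\<in>Pow J. (-1) ^ card (J - L) * \<phi> (insert 1 (Suc ` L)) (tauL L z))"
    apply (rule sum.cong[OF refl])
    subgoal for L
    proof -
      assume "L \<in> Pow J"
      then have L0: "0 \<notin> L" using J0 by auto
      show ?thesis by (simp only: card_ins_ins[OF J0] tauL_ins[OF L0])
    qed
    done
  finally show ?thesis by (simp add: sum_subtractf sum_negf algebra_simps)
qed

lemma decomp: "length r = n \<Longrightarrow> \<exists>J z. J \<subseteq> {1..n} \<and> z \<in> Fn n \<and> r = sigmaJ J z"
proof (induction n arbitrary: r)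
  case 0
  then show ?case by (intro exI[of _ "{}"] exI[of _ "[]"]) (auto simp: Fn_0 sigmaJ_def)
next
  case (Suc n)
  then obtain x r' where r: "r = x # r'" "length r' = n" by (metis length_Suc_conv)
  then obtain J z where Jz: "J \<subseteq> {1..n}" "z \<in> Fn n" "r' = sigmaJ J z" using Suc.IH by blast
  have J0: "0 \<notin> J" using Jz by auto
  show ?case
  proof (cases "x \<in> Fdom")
    case True
    then show ?thesis using Jz r sigmaJ_Suc[OF J0, of x z]
      by (intro exI[of _ "Suc ` J"] exI[of _ "x # z"]) (auto simp: Fn_Cons)
  next
    case False
    then show ?thesis using Jz r sigmaJ_ins[OF J0, of "sig x" z] sig_F[OF False] sig_sig[of x]
      by (intro exI[of _ "insert 1 (Suc ` J)"] exI[of _ "sig x # z"]) (auto simp: Fn_Cons)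
  qed
qed

lemma hyp_good: "hyp n \<phi> f c \<Longrightarrow> good n f c"
proof (induction n arbitrary: \<phi> f c)
  case 0
  have "f (sigmaJ {} []) = (\<Sum>L\<in>Pow {}. (-1) ^ card ({} - L) * \<phi> L (tauL L []))"
    using 0 unfolding hyp_def by (auto simp: Fn_0)
  then show ?case using 0 by (simp add: hyp_def sigmaJ_def tauL_def)
next
  case (Suc n)
  define h where "h r = f (Some 0 # r) + f (sig (Some 0) # r)" for r
  have F0: "Some 0 \<in> Fdom" by (simp add: Fdom_def)
  have key: "f (a # sigmaJ J z) + f (sig a # sigmaJ J z) = (\<Sum>L\<in>Pow J. (-1) ^ card (J - L) * \<phi> (insert 1 (Suc ` L)) (tauL L z))"
    if "a \<in> Fdom" "J \<subseteq> {1..n}" "z \<in> Fn n" for a J z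
    using hyp_A[OF Suc.prems that] hyp_B[OF Suc.prems that]
    by (simp add: sum.distrib[symmetric] algebra_simps)
  have s1: "insert 1 (Suc ` {1..n}) = {1..Suc n}" by auto
  have hh: "hyp n (\<lambda>L t. \<phi> (insert 1 (Suc ` L)) t) h c"
    unfolding hyp_def
  proof (intro conjI allI impI ballI)
    show "\<phi> (insert 1 (Suc ` {1..n})) [] = c" using Suc.prems s1 by (simp add: hyp_def)
    fix J z assume "J \<subseteq> {1..n}" "z \<in> Fn n"
    then show "h (sigmaJ J z) = (\<Sum>L\<in>Pow J. (-1) ^ card (J - L) * \<phi> (insert 1 (Suc ` L)) (tauL L z))"
      using key[OF F0] h_def by simp
  qed
  have p1: "\<forall>a\<in>Fdom. \<forall>r. length r = n \<longrightarrow> f (a # r) + f (sig a # r) = h r"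
  proof (intro ballI allI impI)
    fix a and r :: "complex option list" assume a: "a \<in> Fdom" and r: "length r = n"
    then obtain J z where Jz: "J \<subseteq> {1..n}" "z \<in> Fn n" "r = sigmaJ J z" using decomp[OF r] by blast
    show "f (a # r) + f (sig a # r) = h r"
      by (simp only: h_def Jz(3) key[OF a Jz(1,2)] key[OF F0 Jz(1,2)])
  qed
  have p2: "\<exists>c1. good n (\<lambda>r. f (a # r)) c1" if a: "a \<in> Fdom" for a
  proof -
    have "hyp n (\<lambda>L t. \<phi> (Suc ` L) (a # t)) (\<lambda>r. f (a # r)) (\<phi> (Suc ` {1..n}) [a])"
      unfolding hyp_def using hyp_A[OF Suc.prems a] by auto
    then show ?thesis using Suc.IH by blast
  qed
  show ?case using Suc.IH[OF hh] p1 p2 by auto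
qed



lemma tensor_zero: "(0,0) \<in> set vs \<Longrightarrow> tensor vs bs = 0"
proof -
  assume "(0,0) \<in> set vs"
  then obtain i where i: "i < length vs" "vs ! i = (0,0)" by (metis in_set_conv_nth)
  show ?thesis unfolding tensor_def
    by (rule prod_zero) (use i in \<open>auto intro!: bexI[of _ i]\<close>)
qed

theorem theorem3:
  fixes n :: nat and c :: real
    and \<phi> :: "nat set \<Rightarrow> complex option list \<Rightarrow> real"
    and f :: "complex option list \<Rightarrow> real"
    and u :: "nat \<Rightarrow> (complex \<times> complex) list"
  assumes "n \<ge> 1"
    and "\<phi> {1..n} [] = c"
    and "\<forall>J. J \<subseteq> {1..n} \<longrightarrow> (\<forall>z\<in>Fn n.
           f (sigmaJ J z) = (\<Sum>L\<in>Pow J. (-1) ^ card (J - L) * \<phi> L (tauL L z)))"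
    and "unentangled_onb n u"
  shows "(\<Sum>k<2^n. f (map proj1 (u k))) = c"
proof -
  have g: "good n f c" using hyp_good[of n \<phi> f c] assms(2,3) by (simp add: hyp_def)
  have len: "\<forall>k<2^n. length (u k) = n" and orth: "\<forall>k<2^n. \<forall>l<2^n. inner_n n (tensor (u k)) (tensor (u l)) = (if k = l then 1 else 0)"
    using assms(4) unfolding unentangled_onb_def by blast+
  have nz: "\<forall>q\<in>set (u k). q \<noteq> (0,0)" if k: "k < 2^n" for k
  proof (intro ballI notI)
    fix q assume "q \<in> set (u k)" "q = (0,0)"
    then have "\<And>bs. tensor (u k) bs = 0" using tensor_zero by blast
    then have "inner_n n (tensor (u k)) (tensor (u k)) = 0" by (simp add: inner_n_def)
    then show False using orth k by auto
  qed
  show ?thesis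
  proof (rule main[OF g])
    show "finite {..<(2::nat)^n}" by simp
    show "card {..<(2::nat)^n} = 2^n" by simp
    show "\<forall>k\<in>{..<2^n}. length (u k) = n \<and> (\<forall>q\<in>set (u k). q \<noteq> (0,0))" using len nz by auto
    show "\<forall>k\<in>{..<2^n}. \<forall>l\<in>{..<2^n}. k \<noteq> l \<longrightarrow> inner_n n (tensor (u k)) (tensor (u l)) = 0"
      using orth by auto
  qed
qed


end
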